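(* Let ${\bf R}=(R_1,\dots,R_d)\in\mathbb R_+^d$, $p=\max\{\frac12,R_1,\dots,R_d\}$, $g({\bf R})=\frac{1}{1/R_1+\cdots+1/R_d}$, $b_{\bf R}=\big(\sum_{j=1}^d(1/2)^{2R_j}\big)^{1/(2p)}$, and for $m\in\mathbb N$ let $C(m,{\bf R},d)=\#\{{\bf k}\in\mathbb Z^d:\sum_{j=1}^d|k_j|^{2R_j}\le m^{2p}\}$. Then for every $m\in\mathbb N$, $$\big((m-b_{\bf R})_+\big)^{p/g({\bf R})}\mathrm{vol}(B^d_{2{\bf R}})\le C(m,{\bf R},d)\le (m+b_{\bf R})^{p/g({\bf R})}\mathrm{vol}(B^d_{2{\bf R}}),$$ where $a_+=\max\{a,0\}$.
   Context: $B^d_{2{\bf R}}=\{{\bf x}\in\mathbb R^d:\sum_{j=1}^d|x_j|^{2R_j}\le1\}$ and vol is Lebesgue measure on $\mathbb R^d$. *)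

theory Defs
  imports "HOL-Analysis.Analysis"
begin

text \<open>Exponent vector R = (R_1,...,R_d), indexed by a finite type 'n (d = CARD('n)).\<close>

definition pR :: "real^'n \<Rightarrow> real" where
  "pR R = Max (insert (1/2) {R $ j | j. True})"

definition gR :: "real^'n \<Rightarrow> real" where
  "gR R = 1 / (\<Sum>j\<in>UNIV. 1 / R $ j)"

definition bR :: "real^'n \<Rightarrow> real" where
  "bR R = (\<Sum>j\<in>UNIV. (1/2) powr (2 * R $ j)) powr (1 / (2 * pR R))"

definition ballR :: "real^'n \<Rightarrow> (real^'n) set" where
  "ballR R = {x. (\<Sum>j\<in>UNIV. \<bar>x $ j\<bar> powr (2 * R $ j)) \<le> 1}"

definition CR :: "nat \<Rightarrow> real^'n \<Rightarrow> nat" where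
  "CR m R = card {k :: int^'n. (\<Sum>j\<in>UNIV. \<bar>real_of_int (k $ j)\<bar> powr (2 * R $ j))
                                 \<le> real m powr (2 * pR R)}"

end

theory Submission
  imports Defs
begin


lemma conv_ineq:
  fixes u v lam s :: real
  assumes "0 \<le> lam" "lam \<le> 1" "0 \<le> u" "0 \<le> v" "1 \<le> s"
  shows "((1-lam)* u + lam* v) powr s \<le> (1-lam) * u powr s + lam * v powr s"
proof (cases "u = 0 \<or> v = 0")
  case False
  then have "u > 0" "v > 0" using assms by auto
  from convex_onD[OF powr_convex[OF assms(5)] assms(1,2), of u v] show ?thesis
    using \<open>u>0\<close> \<open>v>0\<close> by simp
next
  case True
  have k: "c powr s \<le> c" if "0 \<le> c" "c \<le> 1" for c :: real
    using that powr_le_one_le[of c s] assms(5) by (cases "c = 0") auto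
  show ?thesis
  proof (cases "u = 0")
    case True
    have "(lam* v) powr s = lam powr s * v powr s" by (simp add: powr_mult)
    also have "\<dots> \<le> lam * v powr s" using k[of lam] assms by (intro mult_right_mono) auto
    finally show ?thesis using True assms by simp
  next
    case False
    with True have "v = 0" by auto
    have "((1-lam)* u) powr s = (1-lam) powr s * u powr s" by (simp add: powr_mult)
    also have "\<dots> \<le> (1-lam) * u powr s" using k[of "1-lam"] assms by (intro mult_right_mono) auto
    finally show ?thesis using \<open>v=0\<close> assms by simp
  qed
qed

lemma sum_powr_zero:
  fixes a :: "'i \<Rightarrow> real"
  assumes "finite I" "\<And>i. i \<in> I \<Longrightarrow> a i \<ge> 0" "s > 0" "(\<Sum>i\<in>I. a i powr s) = 0"
  shows "\<And>i. i \<in> I \<Longrightarrow> a i = 0"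
proof -
  fix i assume "i \<in> I"
  have "\<forall>i\<in>I. a i powr s = 0"
    using sum_nonneg_eq_0_iff[of I "\<lambda>i. a i powr s"] assms by auto
  then show "a i = 0" using \<open>i\<in>I\<close> by simp
qed

lemma minkowski:
  fixes a b :: "'i \<Rightarrow> real"
  assumes fin: "finite I" and a: "\<And>i. i \<in> I \<Longrightarrow> a i \<ge> 0" and b: "\<And>i. i \<in> I \<Longrightarrow> b i \<ge> 0"
    and s: "1 \<le> s"
  shows "(\<Sum>i\<in>I. (a i + b i) powr s) powr (1/s)
     \<le> (\<Sum>i\<in>I. a i powr s) powr (1/s) + (\<Sum>i\<in>I. b i powr s) powr (1/s)"
proof -
  define A where "A = (\<Sum>i\<in>I. a i powr s) powr (1/s)"
  define B where "B = (\<Sum>i\<in>I. b i powr s) powr (1/s)"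
  have SA: "(\<Sum>i\<in>I. a i powr s) = A powr s"
    unfolding A_def using s by (simp add: powr_powr sum_nonneg)
  have SB: "(\<Sum>i\<in>I. b i powr s) = B powr s"
    unfolding B_def using s by (simp add: powr_powr sum_nonneg)
  have A0: "A \<ge> 0" "B \<ge> 0" unfolding A_def B_def by auto
  show ?thesis
  proof (cases "A = 0 \<or> B = 0")
    case True
    then show ?thesis
    proof
      assume "A = 0"
      then have "(\<Sum>i\<in>I. a i powr s) = 0" using SA s by simp
      then have "\<And>i. i \<in> I \<Longrightarrow> a i = 0" using s by (intro sum_powr_zero[OF fin a, where s=s]) auto
      then have "(\<Sum>i\<in>I. (a i + b i) powr s) = (\<Sum>i\<in>I. b i powr s)" by simp
      then show ?thesis using \<open>A = 0\<close> unfolding A_def by simp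
    next
      assume "B = 0"
      then have "(\<Sum>i\<in>I. b i powr s) = 0" using SB s by simp
      then have "\<And>i. i \<in> I \<Longrightarrow> b i = 0" using s by (intro sum_powr_zero[OF fin b, where s=s]) auto
      then have "(\<Sum>i\<in>I. (a i + b i) powr s) = (\<Sum>i\<in>I. a i powr s)" by simp
      then show ?thesis using \<open>B = 0\<close> unfolding B_def by simp
    qed
  next
    case False
    then have Ap: "A > 0" "B > 0" using A0 by auto
    define lam where "lam = B / (A + B)"
    have lam: "0 \<le> lam" "lam \<le> 1" "1 - lam = A / (A+B)" using Ap unfolding lam_def by (auto simp: field_simps)
    have eq: "a i + b i = (A+B) * ((1-lam) * (a i / A) + lam * (b i / B))" for i
    proof -
      have "(A+B) * ((1-lam) * (a i / A)) = a i" using Ap unfolding lam(3) by simp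
      moreover have "(A+B) * (lam * (b i / B)) = b i" using Ap unfolding lam_def by simp
      ultimately show ?thesis by (simp add: distrib_left)
    qed
    have "(\<Sum>i\<in>I. (a i + b i) powr s) = (\<Sum>i\<in>I. (A+B) powr s * ((1-lam) * (a i / A) + lam * (b i / B)) powr s)"
      by (intro sum.cong refl, subst eq) (simp add: powr_mult)
    also have "\<dots> \<le> (\<Sum>i\<in>I. (A+B) powr s * ((1-lam) * (a i / A) powr s + lam * (b i / B) powr s))"
      using a b Ap lam s by (intro sum_mono mult_left_mono conv_ineq) auto
    also have "\<dots> = (A+B) powr s * (\<Sum>i\<in>I. (1-lam) * (a i / A) powr s + lam * (b i / B) powr s)"
      by (simp add: sum_distrib_left)
    also have "\<dots> = (A+B) powr s * ((1-lam) * ((\<Sum>i\<in>I. a i powr s) / A powr s) + lam * ((\<Sum>i\<in>I. b i powr s) / B powr s))"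
      by (simp add: sum.distrib powr_divide sum_distrib_left sum_divide_distrib)
    also have "\<dots> = (A+B) powr s" using Ap by (simp add: SA SB)
    finally have "(\<Sum>i\<in>I. (a i + b i) powr s) \<le> (A+B) powr s" .
    then have "(\<Sum>i\<in>I. (a i + b i) powr s) powr (1/s) \<le> ((A+B) powr s) powr (1/s)"
      using s by (intro powr_mono2) (auto intro: sum_nonneg)
    also have "\<dots> = A + B" using s Ap by (simp add: powr_powr)
    finally show ?thesis unfolding A_def B_def .
  qed
qed

lemma subadd_powr:
  fixes u v q :: real
  assumes "0 \<le> u" "0 \<le> v" "0 < q" "q \<le> 1"
  shows "(u + v) powr q \<le> u powr q + v powr q"
proof (cases "u + v = 0")
  case True then show ?thesis using assms by auto
next
  case False
  then have w: "u + v > 0" using assms by auto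
  have k: "c \<le> c powr q" if "0 \<le> c" "c \<le> 1" for c :: real
    using powr_mono'[of q 1 c] that assms by auto
  have "1 = u/(u+v) + v/(u+v)" using w by (simp add: add_divide_distrib[symmetric])
  also have "\<dots> \<le> (u/(u+v)) powr q + (v/(u+v)) powr q"
    using w assms by (intro add_mono k) auto
  also have "\<dots> = (u powr q + v powr q) / (u+v) powr q" by (simp add: powr_divide add_divide_distrib)
  finally show ?thesis using w by (simp add: field_simps)
qed



definition FR :: "real^'n \<Rightarrow> real^'n \<Rightarrow> real" where
  "FR R x = (\<Sum>j\<in>UNIV. \<bar>x $ j\<bar> powr (2 * R $ j))"

definition NR :: "real^'n \<Rightarrow> real^'n \<Rightarrow> real" where
  "NR R x = FR R x powr (1 / (2 * pR R))"

lemma pR_ge: "1/2 \<le> pR R" "R $ j \<le> pR R"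
proof -
  have fin: "finite (insert (1/2) {R $ j | j. True})"
  proof -
    have "{R $ j | j. True} = range (\<lambda>j. R $ j)" by auto
    then show ?thesis by simp
  qed
  show "1/2 \<le> pR R" unfolding pR_def by (rule Max_ge[OF fin]) simp
  show "R $ j \<le> pR R" unfolding pR_def by (rule Max_ge[OF fin]) auto
qed

lemma FR_nonneg: "0 \<le> FR R x" unfolding FR_def by (simp add: sum_nonneg)

lemma NR_le_iff:
  assumes "0 \<le> t"
  shows "NR R x \<le> t \<longleftrightarrow> FR R x \<le> t powr (2 * pR R)"
proof -
  have p: "pR R > 0" using pR_ge(1)[of R] by linarith
  have e: "FR R x = NR R x powr (2 * pR R)" unfolding NR_def using p FR_nonneg[of R x] by (simp add: powr_powr)
  have n: "0 \<le> NR R x" unfolding NR_def by simp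
  show ?thesis
  proof
    assume "NR R x \<le> t" then show "FR R x \<le> t powr (2 * pR R)" unfolding e using p n
      by (intro powr_mono2) auto
  next
    assume "FR R x \<le> t powr (2 * pR R)"
    then have "FR R x powr (1 / (2 * pR R)) \<le> (t powr (2 * pR R)) powr (1 / (2 * pR R))"
      using p FR_nonneg[of R x] by (intro powr_mono2) auto
    then show "NR R x \<le> t" unfolding NR_def using p assms by (simp add: powr_powr)
  qed
qed

lemma NR_triangle:
  assumes pos: "\<And>j. R $ j > 0"
  shows "NR R (x + y) \<le> NR R x + NR R y"
proof -
  define s where "s = 2 * pR R"
  define q where "q j = R $ j / pR R" for j
  have p: "pR R > 0" using pR_ge(1)[of R] by linarith
  have s: "1 \<le> s" using pR_ge(1)[of R] unfolding s_def by linarith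
  have q: "0 < q j" "q j \<le> 1" for j unfolding q_def using pos[of j] p pR_ge(2)[of R j] by auto
  have qs: "q j * s = 2 * R $ j" for j unfolding q_def s_def using p by simp
  have rw: "\<bar>z\<bar> powr (2 * R $ j) = (\<bar>z\<bar> powr q j) powr s" for z j
    by (simp add: powr_powr qs)
  have "FR R (x + y) \<le> (\<Sum>j\<in>UNIV. (\<bar>x $ j\<bar> powr q j + \<bar>y $ j\<bar> powr q j) powr s)"
    unfolding FR_def
  proof (intro sum_mono)
    fix j
    have "\<bar>(x + y) $ j\<bar> powr q j \<le> (\<bar>x $ j\<bar> + \<bar>y $ j\<bar>) powr q j"
      using q[of j] by (intro powr_mono2) auto
    also have "\<dots> \<le> \<bar>x $ j\<bar> powr q j + \<bar>y $ j\<bar> powr q j"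
      using q[of j] by (intro subadd_powr) auto
    finally show "\<bar>(x + y) $ j\<bar> powr (2 * R $ j) \<le> (\<bar>x $ j\<bar> powr q j + \<bar>y $ j\<bar> powr q j) powr s"
      unfolding rw using s by (intro powr_mono2) auto
  qed
  then have "NR R (x + y) \<le> (\<Sum>j\<in>UNIV. (\<bar>x $ j\<bar> powr q j + \<bar>y $ j\<bar> powr q j) powr s) powr (1/s)"
    unfolding NR_def s_def[symmetric] using s FR_nonneg[of R "x+y"] by (intro powr_mono2) auto
  also have "\<dots> \<le> (\<Sum>j\<in>UNIV. (\<bar>x $ j\<bar> powr q j) powr s) powr (1/s) + (\<Sum>j\<in>UNIV. (\<bar>y $ j\<bar> powr q j) powr s) powr (1/s)"
    using s by (intro minkowski) auto
  also have "\<dots> = NR R x + NR R y"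
    unfolding NR_def FR_def s_def[symmetric] rw ..
  finally show ?thesis .
qed

lemma NR_cube:
  assumes pos: "\<And>j. R $ j > 0" and "\<And>j. \<bar>y $ j\<bar> \<le> 1/2"
  shows "NR R y \<le> bR R"
proof -
  have p: "pR R > 0" using pR_ge(1)[of R] by linarith
  have "FR R y \<le> (\<Sum>j\<in>UNIV. (1/2) powr (2 * R $ j))"
    unfolding FR_def using assms by (intro sum_mono powr_mono2) (auto intro: less_imp_le)
  then show ?thesis unfolding NR_def bR_def using p FR_nonneg[of R y] by (intro powr_mono2) auto
qed



lemma ballR_FR: "ballR R = {x. FR R x \<le> 1}" unfolding ballR_def FR_def ..

lemma ballR_borel: "ballR R \<in> sets borel"
proof -
  have "{x \<in> space borel. FR R x \<le> 1} \<in> sets borel"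
    unfolding FR_def by measurable
  then show ?thesis unfolding ballR_FR by simp
qed

lemma ballR_bounded:
  assumes pos: "\<And>j. R $ j > 0"
  shows "bounded (ballR R)"
proof -
  have "ballR R \<subseteq> cbox (\<chi> j. -1) (\<chi> j. 1)"
  proof
    fix x assume x: "x \<in> ballR R"
    have "\<bar>x $ j\<bar> \<le> 1" for j
    proof (rule ccontr)
      assume "\<not> \<bar>x $ j\<bar> \<le> 1"
      then have "1 < \<bar>x $ j\<bar> powr (2 * R $ j)" using pos[of j] by simp
      also have "\<dots> \<le> FR R x" unfolding FR_def
        by (rule member_le_sum) auto
      finally show False using x unfolding ballR_FR by simp
    qed
    then show "x \<in> cbox (\<chi> j. -1) (\<chi> j. 1)" by (auto simp: mem_box_cart abs_le_iff)
  qed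
  then show ?thesis using bounded_cbox bounded_subset by blast
qed

lemma ballR_lmeasurable:
  assumes pos: "\<And>j. R $ j > 0"
  shows "ballR R \<in> lmeasurable"
  using ballR_bounded[OF pos] ballR_borel
  by (intro bounded_set_imp_lmeasurable sets_completionI_sets) auto


lemma measure_box_unit: "measure lebesgue (box (v - (\<chi> j. 1/2)) (v + (\<chi> j. 1/2))) = (1::real)" for v :: "real^'n"
proof -
  have "measure lebesgue (box (v - (\<chi> j. 1/2)) (v + (\<chi> j. 1/2))) = measure lborel (box (v - (\<chi> j. 1/2)) (v + (\<chi> j. 1/2)))"
    by (simp add: measure_completion)
  also have "\<dots> = 1"
  proof -
    have d: "(v + (\<chi> j. 1/2)) - (v - (\<chi> j. 1/2)) = (\<chi> j. (1::real))" by (simp add: vec_eq_iff)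
    have o: "(\<chi> j. (1::real)) \<bullet> b = 1" if "b \<in> Basis" for b
      using that by (auto simp: Basis_vec_def inner_axis)
    have "\<forall>b\<in>Basis. (v - (\<chi> j. 1/2)) \<bullet> b \<le> (v + (\<chi> j. 1/2)) \<bullet> b"
    proof
      fix b :: "real^'n" assume "b \<in> Basis"
      then have "((v + (\<chi> j. 1/2)) - (v - (\<chi> j. 1/2))) \<bullet> b = 1" using d o by simp
      then show "(v - (\<chi> j. 1/2)) \<bullet> b \<le> (v + (\<chi> j. 1/2)) \<bullet> b" by (simp only: inner_diff_left)
    qed
    moreover have "(\<Prod>b\<in>Basis. (\<chi> j. (1::real)) \<bullet> b) = (1::real)" using o by (intro prod.neutral) auto
    ultimately show ?thesis unfolding measure_lborel_box_eq d by simp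
  qed
  finally show ?thesis .
qed
lemma measure_cbox_unit: "measure lebesgue (cbox (v - (\<chi> j. 1/2)) (v + (\<chi> j. 1/2))) = (1::real)" for v :: "real^'n"
proof -
  have "measure lebesgue (cbox (v - (\<chi> j. 1/2)) (v + (\<chi> j. 1/2))) = measure lborel (cbox (v - (\<chi> j. 1/2)) (v + (\<chi> j. 1/2)))"
    by (simp add: measure_completion)
  also have "\<dots> = 1"
  proof -
    have d: "(v + (\<chi> j. 1/2)) - (v - (\<chi> j. 1/2)) = (\<chi> j. (1::real))" by (simp add: vec_eq_iff)
    have o: "(\<chi> j. (1::real)) \<bullet> b = 1" if "b \<in> Basis" for b
      using that by (auto simp: Basis_vec_def inner_axis)
    have "\<forall>b\<in>Basis. (v - (\<chi> j. 1/2)) \<bullet> b \<le> (v + (\<chi> j. 1/2)) \<bullet> b"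
    proof
      fix b :: "real^'n" assume "b \<in> Basis"
      then have "((v + (\<chi> j. 1/2)) - (v - (\<chi> j. 1/2))) \<bullet> b = 1" using d o by simp
      then show "(v - (\<chi> j. 1/2)) \<bullet> b \<le> (v + (\<chi> j. 1/2)) \<bullet> b" by (simp only: inner_diff_left)
    qed
    moreover have "(\<Prod>b\<in>Basis. (\<chi> j. (1::real)) \<bullet> b) = (1::real)" using o by (intro prod.neutral) auto
    ultimately show ?thesis unfolding measure_lborel_cbox_eq d by simp
  qed
  finally show ?thesis .
qed


lemma FR_stretch:
  assumes pos: "\<And>j. R $ j > 0" and t: "t > 0"
  shows "FR R (\<chi> k. t powr (pR R / R $ k) * z $ k) = t powr (2 * pR R) * FR R z"
proof -
  have "\<bar>t powr (pR R / R $ k) * z $ k\<bar> powr (2 * R $ k) = t powr (2 * pR R) * \<bar>z $ k\<bar> powr (2 * R $ k)" for k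
  proof -
    have "\<bar>t powr (pR R / R $ k) * z $ k\<bar> powr (2 * R $ k) = (t powr (pR R / R $ k)) powr (2 * R $ k) * \<bar>z $ k\<bar> powr (2 * R $ k)"
      using t by (simp add: abs_mult powr_mult)
    also have "(t powr (pR R / R $ k)) powr (2 * R $ k) = t powr (2 * pR R)"
      using pos[of k] by (simp add: powr_powr mult.commute)
    finally show ?thesis .
  qed
  then show ?thesis unfolding FR_def by (simp add: sum_distrib_left)
qed

lemma level_scale:
  assumes pos: "\<And>j. R $ j > 0" and t: "t > 0"
  shows "{x. FR R x \<le> t powr (2 * pR R)} \<in> lmeasurable"
    and "measure lebesgue {x. FR R x \<le> t powr (2 * pR R)} = t powr (pR R / gR R) * measure lebesgue (ballR R)"
proof -
  define m where "m k = t powr (pR R / R $ k)" for k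
  have mp: "m k > 0" for k unfolding m_def using t by simp
  have tp: "t powr (2 * pR R) > 0" using t by simp
  have img: "{x. FR R x \<le> t powr (2 * pR R)} = (\<lambda>x. \<chi> k. m k * x$k) ` ballR R"
  proof (intro set_eqI iffI)
    fix x assume "x \<in> {x. FR R x \<le> t powr (2 * pR R)}"
    then have x: "FR R x \<le> t powr (2 * pR R)" by simp
    define z where "z = (\<chi> k. x $ k / m k)"
    have xz: "x = (\<chi> k. m k * z$k)" unfolding z_def using mp by (simp add: vec_eq_iff less_imp_neq[symmetric])
    have "FR R x = t powr (2 * pR R) * FR R z" unfolding xz m_def using FR_stretch[OF pos t] by simp
    then have "FR R z \<le> 1" using x tp by (simp add: mult_le_cancel_left1)
    then have "z \<in> ballR R" unfolding ballR_FR by simp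
    then show "x \<in> (\<lambda>x. \<chi> k. m k * x$k) ` ballR R" using xz by blast
  next
    fix x assume "x \<in> (\<lambda>x. \<chi> k. m k * x$k) ` ballR R"
    then obtain z where z: "z \<in> ballR R" and xz: "x = (\<chi> k. m k * z$k)" by blast
    have "FR R x = t powr (2 * pR R) * FR R z" unfolding xz m_def using FR_stretch[OF pos t] by simp
    also have "\<dots> \<le> t powr (2 * pR R)" using z tp unfolding ballR_FR by simp
    finally show "x \<in> {x. FR R x \<le> t powr (2 * pR R)}" by simp
  qed
  show "{x. FR R x \<le> t powr (2 * pR R)} \<in> lmeasurable"
    unfolding img by (rule measurable_stretch[OF ballR_lmeasurable[OF pos]])
  have pm: "prod m UNIV = t powr (pR R / gR R)"
  proof -
    have "pR R / gR R = (\<Sum>k\<in>UNIV. pR R / R $ k)" unfolding gR_def by (simp add: sum_distrib_left)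
    then show ?thesis unfolding m_def using t by (simp add: powr_sum)
  qed
  show "measure lebesgue {x. FR R x \<le> t powr (2 * pR R)} = t powr (pR R / gR R) * measure lebesgue (ballR R)"
    unfolding img measure_stretch[OF ballR_lmeasurable[OF pos]] pm using t by simp
qed


definition vi :: "int^'n \<Rightarrow> real^'n" where "vi k = (\<chi> j. real_of_int (k $ j))"

lemma FR_vi: "FR R (vi k) = (\<Sum>j\<in>UNIV. \<bar>real_of_int (k $ j)\<bar> powr (2 * R $ j))"
  unfolding FR_def vi_def by simp

lemma CR_eq: "CR m R = card {k. FR R (vi k) \<le> real m powr (2 * pR R)}"
  unfolding CR_def FR_vi ..

lemma K_finite:
  assumes pos: "\<And>j. R $ j > 0"
  shows "finite {k::int^'n. FR R (vi k) \<le> real m powr (2 * pR R)}"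
proof -
  define M where "M j = \<lceil>real m powr (pR R / R $ j)\<rceil>" for j
  have sub: "{k::int^'n. FR R (vi k) \<le> real m powr (2 * pR R)} \<subseteq> vec_lambda ` (PiE UNIV (\<lambda>j. {- M j .. M j}))"
  proof
    fix k :: "int^'n" assume "k \<in> {k. FR R (vi k) \<le> real m powr (2 * pR R)}"
    then have k: "FR R (vi k) \<le> real m powr (2 * pR R)" by simp
    have "\<bar>k $ j\<bar> \<le> M j" for j
    proof -
      have "\<bar>real_of_int (k $ j)\<bar> powr (2 * R $ j) \<le> FR R (vi k)"
        unfolding FR_vi by (rule member_le_sum) auto
      also note k
      finally have a: "\<bar>real_of_int (k $ j)\<bar> powr (2 * R $ j) \<le> real m powr (2 * pR R)" .
      have "(\<bar>real_of_int (k $ j)\<bar> powr (2 * R $ j)) powr (1 / (2 * R $ j)) \<le> (real m powr (2 * pR R)) powr (1 / (2 * R $ j))"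
        using a pos[of j] by (intro powr_mono2) auto
      then have "\<bar>real_of_int (k $ j)\<bar> \<le> real m powr (pR R / R $ j)"
        using pos[of j] by (simp add: powr_powr)
      then show ?thesis unfolding M_def by linarith
    qed
    then have "\<And>j. - M j \<le> k $ j \<and> k $ j \<le> M j" by (metis abs_le_iff minus_le_iff)
    then have "(\<lambda>j. k $ j) \<in> PiE UNIV (\<lambda>j. {- M j .. M j})" by auto
    then show "k \<in> vec_lambda ` (PiE UNIV (\<lambda>j. {- M j .. M j}))"
      by (rule rev_image_eqI) simp
  qed
  show ?thesis by (rule finite_subset[OF sub]) (intro finite_imageI finite_PiE; simp)
qed

lemma upper_bd:
  fixes R :: "real^'n" and m :: nat
  assumes "\<And>j. R $ j > 0"
    and "m \<ge> 1"
  shows "real (card {k::int^'n. FR R (vi k) \<le> real m powr (2 * pR R)}) \<le> (real m + bR R) powr (pR R / gR R) * measure lebesgue (ballR R)"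
proof -
  note pos = assms(1)
  define K where "K = {k::int^'n. FR R (vi k) \<le> real m powr (2 * pR R)}"
  define h :: "real^'n" where "h = (\<chi> j. (1/2::real))"
  define s where "s = 2 * pR R"
  have finK: "finite K" unfolding K_def by (rule K_finite[OF pos])
  have b0: "bR R \<ge> 0" unfolding bR_def by simp
  have m0: "real m \<ge> 1" using assms(2) by simp
  have Kiff: "k \<in> K \<longleftrightarrow> NR R (vi k) \<le> real m" for k
    unfolding K_def using NR_le_iff[of "real m" R "vi k"] by simp
  have "real (card K) \<le> (real m + bR R) powr (pR R / gR R) * measure lebesgue (ballR R)"
  proof -
    define S where "S = {x. FR R x \<le> (real m + bR R) powr s}"
    have tp: "real m + bR R > 0" using b0 m0 by linarith
    have Sm: "S \<in> lmeasurable" unfolding S_def s_def by (rule level_scale(1)[OF pos tp])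
    have Svol: "measure lebesgue S = (real m + bR R) powr (pR R / gR R) * measure lebesgue (ballR R)"
      unfolding S_def s_def by (rule level_scale(2)[OF pos tp])
    have sub: "(\<Union>k\<in>K. box (vi k - h) (vi k + h)) \<subseteq> S"
    proof clarify
      fix k x assume k: "k \<in> K" and x: "x \<in> box (vi k - h) (vi k + h)"
      have d: "\<bar>(x - vi k) $ j\<bar> \<le> 1/2" for j
        using x[unfolded mem_box_cart h_def, rule_format, of j] by (simp only: vector_minus_component vector_add_component vec_lambda_beta abs_le_iff) linarith
      have "NR R x = NR R (vi k + (x - vi k))" by simp
      also have "\<dots> \<le> NR R (vi k) + NR R (x - vi k)" by (rule NR_triangle[OF pos])
      also have "\<dots> \<le> real m + bR R" using Kiff k NR_cube[OF pos d] by (intro add_mono) auto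
      finally show "x \<in> S" unfolding S_def s_def using NR_le_iff[of "real m + bR R" R x] tp by simp
    qed
    have "real (card K) = (\<Sum>k\<in>K. measure lebesgue (box (vi k - h) (vi k + h)))"
      unfolding h_def measure_box_unit by simp
    also have "\<dots> = measure lebesgue (\<Union>k\<in>K. box (vi k - h) (vi k + h))"
    proof (rule measure_UNION'[symmetric, OF finK])
      show "pairwise (\<lambda>i j. disjnt (box (vi i - h) (vi i + h)) (box (vi j - h) (vi j + h))) K"
        unfolding pairwise_def disjnt_def
      proof (intro ballI impI)
        fix k k' :: "int^'n" assume "k \<in> K" "k' \<in> K" "k \<noteq> k'"
        then obtain j where j: "k $ j \<noteq> k' $ j" by (auto simp: vec_eq_iff)
        then have "k $ j + 1 \<le> k' $ j \<or> k' $ j + 1 \<le> k $ j" by presburger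
        then have j1: "real_of_int (k $ j) + 1 \<le> real_of_int (k' $ j) \<or> real_of_int (k' $ j) + 1 \<le> real_of_int (k $ j)"
          by (metis of_int_1 of_int_add of_int_le_iff)
        show "box (vi k - h) (vi k + h) \<inter> box (vi k' - h) (vi k' + h) = {}"
        proof (rule ccontr)
          assume "box (vi k - h) (vi k + h) \<inter> box (vi k' - h) (vi k' + h) \<noteq> {}"
          then obtain x where x1: "x \<in> box (vi k - h) (vi k + h)" and x2: "x \<in> box (vi k' - h) (vi k' + h)" by blast
          have a: "real_of_int (k $ j) - 1/2 < x $ j \<and> x $ j < real_of_int (k $ j) + 1/2"
            using x1[unfolded mem_box_cart, rule_format, of j] unfolding h_def vi_def
            by (simp only: vector_minus_component vector_add_component vec_lambda_beta)
          have b: "real_of_int (k' $ j) - 1/2 < x $ j \<and> x $ j < real_of_int (k' $ j) + 1/2"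
            using x2[unfolded mem_box_cart, rule_format, of j] unfolding h_def vi_def
            by (simp only: vector_minus_component vector_add_component vec_lambda_beta)
          from j1 a b show False by linarith
        qed
      qed
    qed auto
    also have "\<dots> \<le> measure lebesgue S"
      by (rule measure_mono_fmeasurable[OF sub _ Sm]) (auto intro: sets.finite_UN finK)
    finally show ?thesis using Svol by simp
  qed
  then show ?thesis unfolding K_def .
qed

lemma lower_bd:
  fixes R :: "real^'n" and m :: nat
  assumes "\<And>j. R $ j > 0"
    and "m \<ge> 1"
  shows "(max (real m - bR R) 0) powr (pR R / gR R) * measure lebesgue (ballR R) \<le> real (card {k::int^'n. FR R (vi k) \<le> real m powr (2 * pR R)})"
proof -
  note pos = assms(1)
  define K where "K = {k::int^'n. FR R (vi k) \<le> real m powr (2 * pR R)}"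
  define h :: "real^'n" where "h = (\<chi> j. (1/2::real))"
  define s where "s = 2 * pR R"
  have finK: "finite K" unfolding K_def by (rule K_finite[OF pos])
  have b0: "bR R \<ge> 0" unfolding bR_def by simp
  have m0: "real m \<ge> 1" using assms(2) by simp
  have Kiff: "k \<in> K \<longleftrightarrow> NR R (vi k) \<le> real m" for k
    unfolding K_def using NR_le_iff[of "real m" R "vi k"] by simp
  have "(max (real m - bR R) 0) powr (pR R / gR R) * measure lebesgue (ballR R) \<le> real (card K)"
  proof (cases "real m - bR R \<le> 0")
    case True then show ?thesis by simp
  next
    case False
    then have tp: "real m - bR R > 0" by simp
    define S where "S = {x. FR R x \<le> (real m - bR R) powr s}"
    have Sm: "S \<in> lmeasurable" unfolding S_def s_def by (rule level_scale(1)[OF pos tp])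
    have Svol: "measure lebesgue S = (real m - bR R) powr (pR R / gR R) * measure lebesgue (ballR R)"
      unfolding S_def s_def by (rule level_scale(2)[OF pos tp])
    have sub: "S \<subseteq> (\<Union>k\<in>K. cbox (vi k - h) (vi k + h))"
    proof
      fix x assume "x \<in> S"
      then have xN: "NR R x \<le> real m - bR R" unfolding S_def s_def using NR_le_iff[of "real m - bR R" R x] tp by simp
      define k where "k = (\<chi> j. \<lfloor>x $ j + 1/2\<rfloor>)"
      have kb: "\<bar>(vi k - x) $ j\<bar> \<le> 1/2" for j
      proof -
        have f: "real_of_int \<lfloor>x $ j + 1/2\<rfloor> \<le> x $ j + 1/2 \<and> x $ j + 1/2 < real_of_int \<lfloor>x $ j + 1/2\<rfloor> + 1"
          by linarith
        show ?thesis unfolding k_def vi_def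
          by (simp only: vector_minus_component vec_lambda_beta abs_le_iff) (use f in linarith)
      qed
      have "NR R (vi k) = NR R (x + (vi k - x))" by simp
      also have "\<dots> \<le> NR R x + NR R (vi k - x)" by (rule NR_triangle[OF pos])
      also have "\<dots> \<le> (real m - bR R) + bR R" using xN NR_cube[OF pos kb] by (intro add_mono) auto
      finally have "k \<in> K" using Kiff by simp
      moreover have "x \<in> cbox (vi k - h) (vi k + h)"
        unfolding mem_box_cart h_def
      proof (intro allI)
        fix i show "(vi k - (\<chi> j. 1 / 2)) $ i \<le> x $ i \<and> x $ i \<le> (vi k + (\<chi> j. 1 / 2)) $ i"
          using kb[of i] by (simp only: vector_minus_component vector_add_component vec_lambda_beta abs_le_iff) linarith
      qed
      ultimately show "x \<in> (\<Union>k\<in>K. cbox (vi k - h) (vi k + h))" by blast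
    qed
    have "measure lebesgue S \<le> measure lebesgue (\<Union>k\<in>K. cbox (vi k - h) (vi k + h))"
      by (rule measure_mono_fmeasurable[OF sub]) (use Sm finK in auto)
    also have "\<dots> \<le> (\<Sum>k\<in>K. measure lebesgue (cbox (vi k - h) (vi k + h)))"
      by (rule measure_UNION_le[OF finK]) auto
    also have "\<dots> = real (card K)" unfolding h_def measure_cbox_unit by simp
    finally show ?thesis using Svol tp by simp
  qed
  then show ?thesis unfolding K_def .
qed

theorem mainTheorem9:
  fixes R :: "real^'n" and m :: nat
  assumes "\<And>j. R $ j > 0"
    and "m \<ge> 1"
  shows "(max (real m - bR R) 0) powr (pR R / gR R) * measure lborel (ballR R) \<le> real (CR m R)
       \<and> real (CR m R) \<le> (real m + bR R) powr (pR R / gR R) * measure lborel (ballR R)"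
proof -
  have vol: "measure lborel (ballR R) = measure lebesgue (ballR R)"
    using ballR_borel[of R] by simp
  show ?thesis unfolding CR_eq vol using lower_bd[OF assms] upper_bd[OF assms] by (rule conjI)
qed

end
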